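(* Suppose the geodesic metric space $X$ has the RBP with respect to pieces $\{X_i:i\in I\}$ and constant $M>0$. Let $C\ge 0$, $i\in I$, $x,y\in N_C(X_i)$, and let $\gamma$ be any geodesic from $x$ to $y$. Then $\gamma\subseteq N_{2M+2\max\{M,C\}}(X_i)$. In particular (taking $C=0$) each $X_i$ is $4M$-quasi-convex.
   Context: For $x\in X$ and $r>0$, $B(x;r)=\{z: d(x,z)<r\}$; $N_r(A)=\{z: d(z,A)\le r\}$. Relative bottleneck property (RBP): a geodesic metric space $X$ has the RBP with respect to a collection of subsets ("pieces") $\{X_i:i\in I\}$ and a constant $M>0$ if $X=\bigcup_{i\in I}X_i$ and for all $i\neq j$ in $I$ there is a finite ordered set $I_{i,j}=\{i=i_0,i_1,\dots,i_s=j\}\subseteq I$ and, for each $r\in\{0,\dots,s-1\}$, a point $w_r\in X_{i_r}\cap X_{i_{r+1}}$ such that every path in $X$ from a point of $X_i$ to a point of $X_j$ meets $B(w_r;M)$. A subset $A$ is $k$-quasi-convex if every geodesic with endpoints in $A$ lies in $N_k(A)$. *)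

theory Defs
  imports "HOL-Analysis.Analysis"
begin

text \<open>Closed r-neighbourhood N_r(A) = {z. d(z,A) \<le> r}; d(z,{}) = \<infinity>, so N_r({}) = {}.\<close>
definition nbhd :: "real \<Rightarrow> 'a::metric_space set \<Rightarrow> 'a set" where
  "nbhd r A = {z. A \<noteq> {} \<and> infdist z A \<le> r}"

definition geodesic :: "(real \<Rightarrow> 'a::metric_space) \<Rightarrow> 'a \<Rightarrow> 'a \<Rightarrow> bool" where
  "geodesic \<gamma> x y \<longleftrightarrow> \<gamma> 0 = x \<and> \<gamma> (dist x y) = y \<and>
     (\<forall>s\<in>{0..dist x y}. \<forall>t\<in>{0..dist x y}. dist (\<gamma> s) (\<gamma> t) = \<bar>s - t\<bar>)"

definition geodesic_space :: "'a::metric_space itself \<Rightarrow> bool" where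
  "geodesic_space _ \<longleftrightarrow> (\<forall>x y::'a. \<exists>\<gamma>. geodesic \<gamma> x y)"

definition quasi_convex :: "real \<Rightarrow> 'a::metric_space set \<Rightarrow> bool" where
  "quasi_convex k A \<longleftrightarrow>
     (\<forall>x\<in>A. \<forall>y\<in>A. \<forall>\<gamma>. geodesic \<gamma> x y \<longrightarrow> \<gamma> ` {0..dist x y} \<subseteq> nbhd k A)"

text \<open>Relative bottleneck property of the whole space (type 'a) w.r.t. pieces Xp i, i \<in> I,
  and constant M. The ordered index set I_{i,j} is a distinct list is = [i_0,...,i_s].\<close>
definition RBP :: "'i set \<Rightarrow> ('i \<Rightarrow> 'a::metric_space set) \<Rightarrow> real \<Rightarrow> bool" where
  "RBP I Xp M \<longleftrightarrow> M > 0 \<and> UNIV = (\<Union>i\<in>I. Xp i) \<and>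
     (\<forall>i\<in>I. \<forall>j\<in>I. i \<noteq> j \<longrightarrow>
        (\<exists>is w. is \<noteq> [] \<and> distinct is \<and> set is \<subseteq> I \<and> hd is = i \<and> last is = j \<and>
           (\<forall>r < length is - 1. w r \<in> Xp (is ! r) \<inter> Xp (is ! Suc r) \<and>
              (\<forall>g::real \<Rightarrow> 'a. path g \<and> pathstart g \<in> Xp i \<and> pathfinish g \<in> Xp j \<longrightarrow>
                  (\<exists>t\<in>{0..1}. g t \<in> ball (w r) M)))))"

end

theory Submission
  imports Defs
begin

lemma infdist_lt_ex:
  fixes x :: "'a::metric_space"
  assumes "A \<noteq> {}" "infdist x A < e"
  shows "\<exists>a\<in>A. dist x a < e"
proof -
  have "(INF a\<in>A. dist x a) < e" using assms by (simp add: infdist_notempty)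
  moreover have "bdd_below ((\<lambda>a. dist x a) ` A)"
    by (rule bdd_belowI[of _ 0]) auto
  ultimately show ?thesis using assms(1) by (simp add: cINF_less_iff)
qed

lemma geodesic_cont:
  assumes "geodesic \<gamma> x y"
  shows "continuous_on {0..dist x y} \<gamma>"
  unfolding continuous_on_iff
proof (intro ballI allI impI)
  fix s e :: real assume s: "s \<in> {0..dist x y}" and e: "0 < e"
  show "\<exists>d>0. \<forall>t\<in>{0..dist x y}. dist t s < d \<longrightarrow> dist (\<gamma> t) (\<gamma> s) < e"
    using assms s e unfolding geodesic_def by (intro exI[of _ e]) (auto simp: dist_real_def)
qed

lemma geodesic_rev:
  assumes "geodesic \<gamma> x y"
  shows "geodesic (\<lambda>u. \<gamma> (dist x y - u)) y x"
  using assms unfolding geodesic_def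
  by (auto simp: dist_commute)

lemma one_side:
  fixes \<gamma> :: "real \<Rightarrow> 'a::metric_space"
  assumes gs: "geodesic_space TYPE('a)"
    and g: "geodesic \<gamma> x y" and t: "t \<in> {0..dist x y}"
    and p: "p \<in> A" and z: "\<gamma> t \<in> B"
    and P: "\<forall>g::real \<Rightarrow> 'a. path g \<and> pathstart g \<in> A \<and> pathfinish g \<in> B \<longrightarrow>
                  (\<exists>u\<in>{0..1}. g u \<in> ball w M)"
  shows "dist x w < M + dist p x \<or> (\<exists>s\<in>{0..t}. dist (\<gamma> s) w < M)"
proof -
  obtain \<sigma> where \<sigma>: "geodesic \<sigma> p x" using gs unfolding geodesic_space_def by blast
  define d1 where "d1 = dist p x"
  define g1 where "g1 = (\<lambda>u. \<sigma> (u * d1))"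
  define g2 where "g2 = (\<lambda>u. \<gamma> (u * t))"
  have d1: "d1 \<ge> 0" unfolding d1_def by simp
  have t0: "0 \<le> t" "t \<le> dist x y" using t by auto
  have "path g1" unfolding path_def g1_def
  proof (rule continuous_on_compose2[OF geodesic_cont[OF \<sigma>]])
    show "continuous_on {0..1} (\<lambda>u. u * d1)" by (intro continuous_intros)
    show "(\<lambda>u. u * d1) ` {0..1} \<subseteq> {0..dist p x}"
      using d1 unfolding d1_def by (auto simp: mult_left_le_one_le)
  qed
  moreover have "path g2" unfolding path_def g2_def
  proof (rule continuous_on_compose2[OF geodesic_cont[OF g]])
    show "continuous_on {0..1} (\<lambda>u. u * t)" by (intro continuous_intros)
    show "(\<lambda>u. u * t) ` {0..1} \<subseteq> {0..dist x y}"
      using t0 by (auto intro: order_trans[OF mult_left_le_one_le])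
  qed
  moreover have "pathfinish g1 = pathstart g2"
    using \<sigma> g unfolding pathfinish_def pathstart_def g1_def g2_def geodesic_def d1_def by simp
  ultimately have "path (g1 +++ g2)" by (rule path_join_imp)
  moreover have "pathstart (g1 +++ g2) \<in> A"
    using \<sigma> p unfolding pathstart_def joinpaths_def g1_def geodesic_def by simp
  moreover have "pathfinish (g1 +++ g2) \<in> B"
    using z unfolding pathfinish_def joinpaths_def g2_def by simp
  ultimately obtain u where u: "u \<in> {0..1}" "(g1 +++ g2) u \<in> ball w M" using P by blast
  show ?thesis
  proof (cases "u \<le> 1/2")
    case True
    define s where "s = 2 * u * d1"
    have s: "0 \<le> s" "s \<le> d1" unfolding s_def using u True d1
      by (auto intro: mult_left_le_one_le)
    have "dist w (\<sigma> s) < M" using u True unfolding joinpaths_def g1_def s_def by simp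
    moreover have "dist (\<sigma> s) (\<sigma> d1) = \<bar>s - d1\<bar>"
    proof -
      have iso: "\<forall>a\<in>{0..d1}. \<forall>b\<in>{0..d1}. dist (\<sigma> a) (\<sigma> b) = \<bar>a - b\<bar>"
        using \<sigma> unfolding geodesic_def d1_def by blast
      then show ?thesis using s d1 by simp
    qed
    moreover have "\<sigma> d1 = x" using \<sigma> unfolding geodesic_def d1_def by simp
    moreover have "dist x w \<le> dist x (\<sigma> s) + dist (\<sigma> s) w" by (rule dist_triangle)
    ultimately have "dist x w < M + d1" using s by (simp add: dist_commute)
    then show ?thesis unfolding d1_def by simp
  next
    case False
    define s where "s = (2 * u - 1) * t"
    have s: "0 \<le> s" "s \<le> t" unfolding s_def using u False t0
      by (auto intro: mult_left_le_one_le)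
    have "dist w (\<gamma> s) < M" using u False unfolding joinpaths_def g2_def s_def by simp
    then show ?thesis using s by (auto simp: dist_commute)
  qed
qed

lemma main_part:
  fixes I :: "'i set" and Xp :: "'i \<Rightarrow> 'a::metric_space set" and M C :: real
    and i :: 'i and x y :: 'a and \<gamma> :: "real \<Rightarrow> 'a"
  assumes gs: "geodesic_space TYPE('a)"
    and R: "RBP I Xp M"
    and C: "C \<ge> 0" and i: "i \<in> I"
    and x: "x \<in> nbhd C (Xp i)" and y: "y \<in> nbhd C (Xp i)"
    and g: "geodesic \<gamma> x y"
  shows "\<gamma> ` {0..dist x y} \<subseteq> nbhd (2*M + 2 * max M C) (Xp i)"
proof
  fix z assume "z \<in> \<gamma> ` {0..dist x y}"
  then obtain t where t: "t \<in> {0..dist x y}" and zt: "z = \<gamma> t" by blast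
  define D where "D = dist x y"
  have ne: "Xp i \<noteq> {}" and ix: "infdist x (Xp i) \<le> C" and iy: "infdist y (Xp i) \<le> C"
    using x y unfolding nbhd_def by auto
  note RR = RBP_def[THEN iffD1, OF R]
  have M0: "M > 0" using conjunct1[OF RR] .
  have "z \<in> (\<Union>i\<in>I. Xp i)" using conjunct1[OF conjunct2[OF RR]] by (metis UNIV_I)
  then obtain j where j: "j \<in> I" "z \<in> Xp j" by blast
  show "z \<in> nbhd (2*M + 2 * max M C) (Xp i)"
  proof (cases "j = i")
    case True
    then show ?thesis using j ne M0 unfolding nbhd_def by (simp add: max_def)
  next
    case False
    then obtain "is" w where isw: "is \<noteq> []" "distinct is" "set is \<subseteq> I" "hd is = i" "last is = j"
      "\<forall>r < length is - 1. w r \<in> Xp (is ! r) \<inter> Xp (is ! Suc r) \<and>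
              (\<forall>g::real \<Rightarrow> 'a. path g \<and> pathstart g \<in> Xp i \<and> pathfinish g \<in> Xp j \<longrightarrow>
                  (\<exists>t\<in>{0..1}. g t \<in> ball (w r) M))"
      using mp[OF bspec[OF bspec[OF conjunct2[OF conjunct2[OF RR]] i] j(1)] not_sym[OF False]] by (elim exE conjE) blast
    have "length is \<noteq> 1"
    proof
      assume "length is = 1"
      then obtain a where "is = [a]" by (cases "is") auto
      then show False using isw False by simp
    qed
    then have l0: "0 < length is - 1" using isw(1) by (cases "is") auto
    have W: "w 0 \<in> Xp i" using spec[OF isw(6), of 0] l0 isw(1,4) by (simp add: hd_conv_nth)
    have P: "\<forall>g::real \<Rightarrow> 'a. path g \<and> pathstart g \<in> Xp i \<and> pathfinish g \<in> Xp j \<longrightarrow>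
                  (\<exists>t\<in>{0..1}. g t \<in> ball (w 0) M)" using spec[OF isw(6), of 0] l0 by simp
    have iso: "\<forall>a\<in>{0..D}. \<forall>b\<in>{0..D}. dist (\<gamma> a) (\<gamma> b) = \<bar>a - b\<bar>"
      and g0: "\<gamma> 0 = x" and gD: "\<gamma> D = y"
      using g unfolding geodesic_def D_def by auto
    have t0: "0 \<le> t" "t \<le> D" using t D_def by auto
    have isoI: "\<And>a b. 0 \<le> a \<Longrightarrow> a \<le> D \<Longrightarrow> 0 \<le> b \<Longrightarrow> b \<le> D \<Longrightarrow> dist (\<gamma> a) (\<gamma> b) = \<bar>a - b\<bar>"
      using iso by auto
    have mx: "M \<le> max M C" "C \<le> max M C" by auto
    have "dist z (w 0) \<le> 2*M + 2 * max M C"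
    proof (rule field_le_epsilon)
      fix e :: real assume e: "0 < e"
      obtain p where p: "p \<in> Xp i" "dist x p < C + e/2"
        using infdist_lt_ex[OF ne, of x "C + e/2"] ix e by auto
      obtain q where q: "q \<in> Xp i" "dist y q < C + e/2"
        using infdist_lt_ex[OF ne, of y "C + e/2"] iy e by auto
      have L: "dist x (w 0) < M + dist p x \<or> (\<exists>s\<in>{0..t}. dist (\<gamma> s) (w 0) < M)"
        using one_side[OF gs g t p(1) _ P] j zt by simp
      have gr: "geodesic (\<lambda>u. \<gamma> (D - u)) y x" using geodesic_rev[OF g] D_def by simp
      have t': "D - t \<in> {0..dist y x}" using t0 D_def by (simp add: dist_commute)
      have Rr: "dist y (w 0) < M + dist q y \<or> (\<exists>s\<in>{0..D - t}. dist (\<gamma> (D - s)) (w 0) < M)"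
        using one_side[OF gs gr t' q(1) _ P] j zt by simp
      have dzx: "dist z x = t" using isoI[of t 0] t0 g0 zt by simp
      have dzy: "dist z y = D - t" using isoI[of t D] t0 gD zt by simp
      have dxy: "dist x y = D" using D_def by simp
      have px: "dist p x < C + e/2" using p by (simp add: dist_commute)
      have qy: "dist q y < C + e/2" using q by (simp add: dist_commute)
      have c1: "dist (w 0) y = dist y (w 0)" "dist (w 0) x = dist x (w 0)" by (simp_all add: dist_commute)
      have c2: "\<And>u. dist u (w 0) = dist (w 0) u" by (simp add: dist_commute)
      have tr1: "dist z (w 0) \<le> dist z x + dist x (w 0)" by (rule dist_triangle)
      have tr2: "dist z (w 0) \<le> dist z y + dist y (w 0)" by (rule dist_triangle)
      show "dist z (w 0) \<le> 2*M + 2 * max M C + e"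
      proof -
        {
          assume a: "dist x (w 0) < M + dist p x" and b: "dist y (w 0) < M + dist q y"
          have "dist x y \<le> dist x (w 0) + dist (w 0) y" by (rule dist_triangle)
          then have ?thesis using a b tr1 tr2 dzx dzy dxy px qy mx c1 e M0 by linarith
        }
        moreover {
          fix s1 assume s1: "s1 \<in> {0..t}" "dist (\<gamma> s1) (w 0) < M"
            and b: "dist y (w 0) < M + dist q y"
          have "dist (\<gamma> s1) y = D - s1" using isoI[of s1 D] s1 t0 gD
            by simp
          moreover have "dist z (\<gamma> s1) = t - s1" using isoI[of t s1] s1 t0 zt
            by simp
          moreover have "dist (\<gamma> s1) y \<le> dist (\<gamma> s1) (w 0) + dist (w 0) y" by (rule dist_triangle)
          moreover have "dist z (w 0) \<le> dist z (\<gamma> s1) + dist (\<gamma> s1) (w 0)" by (rule dist_triangle)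
          ultimately have ?thesis using s1 b tr2 dzy qy mx c1 e M0 by linarith
        }
        moreover {
          fix s assume s2: "s \<in> {0..D - t}" "dist (\<gamma> (D - s)) (w 0) < M"
            and a: "dist x (w 0) < M + dist p x"
          have "dist x (\<gamma> (D - s)) = D - s" using isoI[of 0 "D - s"] s2 t0 g0
            by simp
          moreover have "dist z (\<gamma> (D - s)) = D - s - t" using isoI[of t "D - s"] s2 t0 zt
            by simp
          moreover have "dist x (\<gamma> (D - s)) \<le> dist x (w 0) + dist (w 0) (\<gamma> (D - s))" by (rule dist_triangle)
          moreover have "dist z (w 0) \<le> dist z (\<gamma> (D - s)) + dist (\<gamma> (D - s)) (w 0)" by (rule dist_triangle)
          ultimately have ?thesis using s2 a tr1 dzx px mx c2[of "\<gamma> (D - s)"] e M0 by linarith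
        }
        moreover {
          fix s1 s assume s1: "s1 \<in> {0..t}" "dist (\<gamma> s1) (w 0) < M"
            and s2: "s \<in> {0..D - t}" "dist (\<gamma> (D - s)) (w 0) < M"
          have "dist (\<gamma> s1) (\<gamma> (D - s)) = D - s - s1" using isoI[of s1 "D - s"] s1 s2 t0
            by simp
          moreover have "dist z (\<gamma> (D - s)) = D - s - t" using isoI[of t "D - s"] s2 t0 zt
            by simp
          moreover have "dist z (\<gamma> s1) = t - s1" using isoI[of t s1] s1 t0 zt
            by simp
          moreover have "dist (\<gamma> s1) (\<gamma> (D - s)) \<le> dist (\<gamma> s1) (w 0) + dist (w 0) (\<gamma> (D - s))" by (rule dist_triangle)
          moreover have "dist z (w 0) \<le> dist z (\<gamma> (D - s)) + dist (\<gamma> (D - s)) (w 0)" by (rule dist_triangle)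
          moreover have "dist z (w 0) \<le> dist z (\<gamma> s1) + dist (\<gamma> s1) (w 0)" by (rule dist_triangle)
          ultimately have ?thesis using s1 s2 mx c2[of "\<gamma> (D - s)"] e M0 by linarith
        }
        ultimately show ?thesis using L Rr by blast
      qed
    qed
    then have "infdist z (Xp i) \<le> 2*M + 2 * max M C"
      using infdist_le[OF W, of z] by linarith
    then show ?thesis using ne unfolding nbhd_def by simp
  qed
qed

theorem lemma2p3:
  fixes I :: "'i set" and Xp :: "'i \<Rightarrow> 'a::metric_space set" and M C :: real
    and i :: 'i and x y :: 'a and \<gamma> :: "real \<Rightarrow> 'a"
  assumes "geodesic_space TYPE('a)"
    and "RBP I Xp M"
    and "C \<ge> 0" and "i \<in> I"
    and "x \<in> nbhd C (Xp i)" and "y \<in> nbhd C (Xp i)"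
    and "geodesic \<gamma> x y"
  shows "\<gamma> ` {0..dist x y} \<subseteq> nbhd (2*M + 2 * max M C) (Xp i)
         \<and> (\<forall>k\<in>I. quasi_convex (4*M) (Xp k))"
proof
  show "\<gamma> ` {0..dist x y} \<subseteq> nbhd (2*M + 2 * max M C) (Xp i)"
    using main_part[OF assms] .
  have M0: "M > 0" using assms(2) unfolding RBP_def by simp
  show "\<forall>k\<in>I. quasi_convex (4*M) (Xp k)"
    unfolding quasi_convex_def
  proof (intro ballI allI impI)
    fix k a b g assume k: "k \<in> I" and a: "a \<in> Xp k" and b: "b \<in> Xp k" and g: "geodesic g a b"
    have "a \<in> nbhd 0 (Xp k)" "b \<in> nbhd 0 (Xp k)" using a b unfolding nbhd_def by auto
    from main_part[OF assms(1,2) order_refl k this g]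
    show "g ` {0..dist a b} \<subseteq> nbhd (4*M) (Xp k)" using M0 by (simp add: max_def)
  qed
qed

end
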